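(* Let $\mathbf{S}$ ($n\times n$), $\hat{\mathbf{U}}$ ($m\times n$), $\mathbf{V}$ ($n\times m$) be constant complex matrices and $\hat{\mathbf{K}}$ an $n\times n$ matrix with $\mathbf{S}\hat{\mathbf{K}}+\hat{\mathbf{K}}\mathbf{S}=\mathbf{V}\hat{\mathbf{U}}$. Let $\hat{\mathbf{\Xi}}=e^{-2(x\mathbf{S}+t\mathbf{S}^3)}$, $x,t\in\mathbb{R}$. Then, wherever $\mathbf{I}-\hat{\mathbf{K}}\hat{\mathbf{\Xi}}$ is invertible, $u=\phi_x$ with $\phi=\hat{\mathbf{U}}\hat{\mathbf{\Xi}}(\mathbf{I}-\hat{\mathbf{K}}\hat{\mathbf{\Xi}})^{-1}\mathbf{V}$ solves the $m\times m$ matrix KdV equation $u_t-\tfrac14u_{xxx}-\tfrac32(u^2)_x=0$.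
   Context: $\mathbf{I}=I_n$; subscripts $x,t$ denote partial derivatives. *)

theory Defs
  imports "HOL-Analysis.Analysis"
begin

primrec mpow :: "complex^'n^'n \<Rightarrow> nat \<Rightarrow> complex^'n^'n" where
  "mpow A 0 = mat 1"
| "mpow A (Suc k) = A ** mpow A k"

definition mexp :: "complex^'n^'n \<Rightarrow> complex^'n^'n" where
  "mexp A = (\<Sum>k. (inverse (fact k :: real)) *\<^sub>R mpow A k)"

definition pdx :: "(real \<Rightarrow> real \<Rightarrow> 'a::real_normed_vector) \<Rightarrow> real \<Rightarrow> real \<Rightarrow> 'a" where
  "pdx f x t = vector_derivative (\<lambda>y. f y t) (at x)"

definition pdt :: "(real \<Rightarrow> real \<Rightarrow> 'a::real_normed_vector) \<Rightarrow> real \<Rightarrow> real \<Rightarrow> 'a" where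
  "pdt f x t = vector_derivative (\<lambda>s. f x s) (at t)"

end

theory Submission
  imports Defs
begin


typedef (overloaded) ('n::finite) sq = "UNIV :: (complex^'n^'n) set"
  morphisms Rep_sq Abs_sq by auto

setup_lifting type_definition_sq

lemma bl_mv: "bounded_linear ((*v) (A::complex^'n::finite^'n))"
  by simp

instantiation sq :: (finite) real_normed_algebra_1
begin
lift_definition zero_sq :: "'a sq" is 0 .
lift_definition one_sq :: "'a sq" is "mat 1" .
lift_definition plus_sq :: "'a sq \<Rightarrow> 'a sq \<Rightarrow> 'a sq" is "(+)" .
lift_definition minus_sq :: "'a sq \<Rightarrow> 'a sq \<Rightarrow> 'a sq" is "(-)" .
lift_definition uminus_sq :: "'a sq \<Rightarrow> 'a sq" is "uminus" .
lift_definition times_sq :: "'a sq \<Rightarrow> 'a sq \<Rightarrow> 'a sq" is "(**)" .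
lift_definition scaleR_sq :: "real \<Rightarrow> 'a sq \<Rightarrow> 'a sq" is "scaleR" .
lift_definition norm_sq :: "'a sq \<Rightarrow> real" is "\<lambda>A. onorm ((*v) A)" .
definition dist_sq :: "'a sq \<Rightarrow> 'a sq \<Rightarrow> real" where "dist_sq a b = norm (a - b)"
definition sgn_sq :: "'a sq \<Rightarrow> 'a sq" where "sgn_sq x = scaleR (inverse (norm x)) x"
definition uniformity_sq :: "('a sq \<times> 'a sq) filter" where
  "uniformity_sq = (INF e\<in>{0 <..}. principal {(x, y). dist x y < e})"
definition open_sq :: "'a sq set \<Rightarrow> bool" where
  "open_sq S = (\<forall>x\<in>S. \<forall>\<^sub>F (x', y) in uniformity. x' = x \<longrightarrow> y \<in> S)"

lemma mm_rdistrib: "((A::'b::semiring_1^'n::finite^'m) + B) ** C = A ** C + B ** C"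
  by (vector matrix_matrix_mult_def sum.distrib[symmetric] field_simps)

lemma mv_scaleR: "(r *\<^sub>R (A::complex^'n::finite^'n)) *v v = r *\<^sub>R (A *v v)"
  by (vector matrix_vector_mult_def scaleR_sum_right)

lemma mv_add: "((A::complex^'n::finite^'n) + B) *v v = A *v v + B *v v"
  by (vector matrix_vector_mult_def sum.distrib distrib_right)

instance
  apply intro_classes
  unfolding dist_sq_def sgn_sq_def uniformity_sq_def open_sq_def
  subgoal by transfer (simp add: add.assoc)
  subgoal by transfer (simp add: add.commute)
  subgoal by transfer simp
  subgoal by transfer simp
  subgoal by transfer simp
  subgoal by transfer (simp add: scaleR_add_right)
  subgoal by transfer (simp add: scaleR_add_left)
  subgoal by transfer simp
  subgoal by transfer simp
  subgoal by transfer (simp add: matrix_mul_assoc)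
  subgoal by transfer (simp add: mm_rdistrib)
  subgoal by transfer (simp add: matrix_add_ldistrib)
  subgoal by transfer (simp add: scalar_matrix_assoc)
  subgoal by transfer (simp add: matrix_scalar_ac scalar_matrix_assoc)
  subgoal by transfer simp
  subgoal by transfer simp
  subgoal by transfer (auto simp: mat_def vec_eq_iff)
  subgoal by simp
  subgoal by simp
  subgoal by simp
  subgoal by simp
  subgoal apply transfer apply (simp add: onorm_eq_0)
    by (metis matrix_vector_mult_0 matrix_eq)
  subgoal apply transfer
    subgoal for x y
    using onorm_triangle[OF bl_mv[of x] bl_mv[of y]]
    proof -
      have "(*v) (x+y) = (\<lambda>v. x *v v + y *v v)" by (rule ext) (simp add: mv_add)
      thus ?thesis using onorm_triangle[OF bl_mv[of x] bl_mv[of y]] by simp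
    qed done
  subgoal apply transfer
    subgoal for a x
    proof -
      have "(*v) (a *\<^sub>R x) = (\<lambda>v. a *\<^sub>R (x *v v))" by (rule ext) (simp add: mv_scaleR)
      thus ?thesis using onorm_scaleR[OF bl_mv[of x], of a] by simp
    qed done
  subgoal apply transfer
    subgoal for x y
    proof -
      have "(*v) (x ** y) = (*v) x o (*v) y" by (rule ext) (simp add: matrix_vector_mul_assoc)
      thus ?thesis using onorm_compose[OF bl_mv[of x] bl_mv[of y]] by simp
    qed done
  subgoal apply transfer
    proof -
      have "(*v) (mat 1 :: complex^'a^'a) = (\<lambda>v. v)" by (rule ext) simp
      thus "onorm ((*v) (mat 1 :: complex^'a^'a)) = 1" using onorm_id by simp
    qed
  done
end

lemma norm_sq_eq: "norm a = onorm ((*v) (Rep_sq a))"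
  by (simp add: norm_sq.rep_eq)

lemma norm_axis_c: "norm (axis j (1::complex) :: complex^'n::finite) = 1"
proof -
  have eq: "(\<lambda>i. (norm ((axis j (1::complex) :: complex^'n) $ i))\<^sup>2) = (\<lambda>i. if i = j then 1 else 0)"
    by (auto simp: axis_def)
  show ?thesis unfolding norm_vec_def L2_set_def eq by simp
qed

lemma mv_axis: "((A::complex^'n::finite^'n) *v axis j (1::complex)) $ i = A $ i $ j"
  unfolding matrix_vector_mult_def axis_def
  by (simp add: if_distrib cong: if_cong)

lemma entry_le_onorm: "norm ((A::complex^'n::finite^'n) $ i $ j) \<le> onorm ((*v) A)"
proof -
  have "norm (A $ i $ j) \<le> norm (A *v axis j 1)"
    using Finite_Cartesian_Product.norm_nth_le[where x="A *v axis j (1::complex)" and i=i] by (simp add: mv_axis)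
  also have "\<dots> \<le> onorm ((*v) A) * norm (axis j (1::complex))"
    by (rule onorm[OF bl_mv])
  finally show ?thesis by (simp add: norm_axis_c)
qed

lemma norm_vec_le_sum: "norm (x::'a::real_normed_vector^'n::finite) \<le> (\<Sum>i\<in>UNIV. norm (x $ i))"
  unfolding norm_vec_def by (rule L2_set_le_sum) simp

lemma norm_Rep_le: "norm (Rep_sq a) \<le> real (CARD('n)) ^ 2 * norm (a::'n::finite sq)"
proof -
  have "norm (Rep_sq a) \<le> (\<Sum>i\<in>UNIV. norm (Rep_sq a $ i))" by (rule norm_vec_le_sum)
  also have "\<dots> \<le> (\<Sum>i\<in>(UNIV::'n set). \<Sum>j\<in>(UNIV::'n set). norm (Rep_sq a $ i $ j))"
    by (intro sum_mono norm_vec_le_sum)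
  also have "\<dots> \<le> (\<Sum>i\<in>(UNIV::'n set). \<Sum>j\<in>(UNIV::'n set). norm a)"
    by (intro sum_mono) (simp add: norm_sq_eq entry_le_onorm)
  also have "\<dots> = real (CARD('n)) ^ 2 * norm a" by (simp add: power2_eq_square)
  finally show ?thesis .
qed

lemma onorm_le_vec: "onorm ((*v) (A::complex^'n::finite^'n)) \<le> real (CARD('n)) ^ 2 * norm A"
proof (rule onorm_bound)
  show "0 \<le> real (CARD('n)) ^ 2 * norm A" by simp
  fix v :: "complex^'n"
  have "norm (A *v v) \<le> (\<Sum>i\<in>UNIV. norm ((A *v v) $ i))" by (rule norm_vec_le_sum)
  also have "\<dots> \<le> (\<Sum>i\<in>(UNIV::'n set). \<Sum>j\<in>(UNIV::'n set). norm (A $ i $ j) * norm (v $ j))"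
    unfolding matrix_vector_mult_def
    by (intro sum_mono) (auto intro!: order_trans[OF norm_sum] sum_mono simp: norm_mult)
  also have "\<dots> \<le> (\<Sum>i\<in>(UNIV::'n set). \<Sum>j\<in>(UNIV::'n set). norm A * norm v)"
  proof (intro sum_mono mult_mono)
    fix i j
    show "norm (A $ i $ j) \<le> norm A"
      using Finite_Cartesian_Product.norm_nth_le[of "A $ i" j] Finite_Cartesian_Product.norm_nth_le[of A i] by linarith
    show "norm (v $ j) \<le> norm v" by (rule Finite_Cartesian_Product.norm_nth_le)
  qed auto
  also have "\<dots> = real (CARD('n)) ^ 2 * norm A * norm v" by (simp add: power2_eq_square)
  finally show "norm (A *v v) \<le> real (CARD('n)) ^ 2 * norm A * norm v" .
qed

instance sq :: (finite) banach
proof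
  fix X :: "nat \<Rightarrow> 'a sq"
  assume "Cauchy X"
  define C where "C = real (CARD('a)) ^ 2"
  have Cpos: "C > 0" by (simp add: C_def)
  have "Cauchy (\<lambda>n. Rep_sq (X n))"
  proof (rule metric_CauchyI)
    fix e :: real assume "e > 0"
    then obtain M where M: "\<forall>m\<ge>M. \<forall>n\<ge>M. dist (X m) (X n) < e / C"
      using \<open>Cauchy X\<close> Cpos by (metis Cauchy_def divide_pos_pos)
    show "\<exists>M. \<forall>m\<ge>M. \<forall>n\<ge>M. dist (Rep_sq (X m)) (Rep_sq (X n)) < e"
    proof (intro exI allI impI)
      fix m n assume "m \<ge> M" "n \<ge> M"
      have "dist (Rep_sq (X m)) (Rep_sq (X n)) = norm (Rep_sq (X m - X n))"
        by (simp add: dist_norm minus_sq.rep_eq)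
      also have "\<dots> \<le> C * norm (X m - X n)" unfolding C_def by (rule norm_Rep_le)
      also have "\<dots> < C * (e / C)" using M \<open>m \<ge> M\<close> \<open>n \<ge> M\<close> Cpos
        by (intro mult_strict_left_mono) (auto simp: dist_norm)
      finally show "dist (Rep_sq (X m)) (Rep_sq (X n)) < e" using Cpos by simp
    qed
  qed
  then obtain L where L: "(\<lambda>n. Rep_sq (X n)) \<longlonglongrightarrow> L"
    using convergent_eq_Cauchy by blast
  have "X \<longlonglongrightarrow> Abs_sq L"
  proof (rule LIMSEQ_I)
    fix e :: real assume "e > 0"
    then obtain M where M: "\<forall>n\<ge>M. norm (Rep_sq (X n) - L) < e / C"
      using L Cpos by (metis LIMSEQ_D divide_pos_pos)
    show "\<exists>M. \<forall>n\<ge>M. norm (X n - Abs_sq L) < e"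
    proof (intro exI allI impI)
      fix n assume "n \<ge> M"
      have "norm (X n - Abs_sq L) = onorm ((*v) (Rep_sq (X n) - L))"
        by (simp add: norm_sq_eq minus_sq.rep_eq Abs_sq_inverse)
      also have "\<dots> \<le> C * norm (Rep_sq (X n) - L)" unfolding C_def by (rule onorm_le_vec)
      also have "\<dots> < C * (e / C)" using M \<open>n \<ge> M\<close> Cpos
        by (intro mult_strict_left_mono) auto
      finally show "norm (X n - Abs_sq L) < e" using Cpos by simp
    qed
  qed
  thus "convergent X" by (auto simp: convergent_def)
qed




lemma Rep_add: "Rep_sq (a + b) = Rep_sq a + Rep_sq b" by (simp add: plus_sq.rep_eq)
lemma Rep_diff: "Rep_sq (a - b) = Rep_sq a - Rep_sq b" by (simp add: minus_sq.rep_eq)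
lemma Rep_minus: "Rep_sq (- a) = - Rep_sq a" by (simp add: uminus_sq.rep_eq)
lemma Rep_mult: "Rep_sq (a * b) = Rep_sq a ** Rep_sq b" by (simp add: times_sq.rep_eq)
lemma Rep_scaleR: "Rep_sq (r *\<^sub>R a) = r *\<^sub>R Rep_sq a" by (simp add: scaleR_sq.rep_eq)
lemma Rep_one: "Rep_sq 1 = mat 1" by (simp add: one_sq.rep_eq)
lemma Rep_zero: "Rep_sq 0 = 0" by (simp add: zero_sq.rep_eq)
lemmas Rep_simps = Rep_add Rep_diff Rep_minus Rep_mult Rep_scaleR Rep_one Rep_zero Abs_sq_inverse[OF UNIV_I] Rep_sq_inverse

lemma bl_Rep: "bounded_linear (Rep_sq :: 'n::finite sq \<Rightarrow> _)"
  by (rule bounded_linear_intro[where K="real (CARD('n)) ^ 2"])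
     (auto simp: Rep_add Rep_scaleR, metis mult.commute norm_Rep_le)

lemma Rep_power: "Rep_sq (a ^ n) = mpow (Rep_sq a) n"
  by (induction n) (auto simp: Rep_one Rep_mult)

lemma mexp_Rep: "mexp A = Rep_sq (exp (Abs_sq A))"
proof -
  have "Rep_sq (exp (Abs_sq A)) = (\<Sum>n. Rep_sq (Abs_sq A ^ n /\<^sub>R fact n))"
    unfolding exp_def by (rule bounded_linear.suminf[OF bl_Rep summable_exp_generic])
  also have "\<dots> = mexp A"
    unfolding mexp_def by (simp add: Rep_scaleR Rep_power Abs_sq_inverse)
  finally show ?thesis ..
qed

lemma exp_commute:
  fixes x z :: "'a::{real_normed_algebra_1,banach}"
  assumes "x * z = z * x"
  shows "x * exp z = exp z * x"
proof -
  have "x * exp z = (\<Sum>n. x * (z ^ n /\<^sub>R fact n))"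
    unfolding exp_def by (rule suminf_mult[OF summable_exp_generic, symmetric])
  also have "\<dots> = (\<Sum>n. (z ^ n /\<^sub>R fact n) * x)"
    using power_commuting_commutes[OF assms[symmetric]]
    by (simp add: mult_scaleR_left mult_scaleR_right)
  also have "\<dots> = exp z * x"
    unfolding exp_def by (rule suminf_mult2[OF summable_exp_generic, symmetric])
  finally show ?thesis .
qed




lemma quot_norm_eq:
  fixes a D :: "'a::real_normed_vector" and h :: real
  assumes "h \<noteq> 0"
  shows "norm ((a - h *\<^sub>R D) /\<^sub>R norm h) = norm (a /\<^sub>R h - D)"
proof -
  have "a /\<^sub>R h - D = (1/h) *\<^sub>R (a - h *\<^sub>R D)" using assms by (simp add: scaleR_diff_right inverse_eq_divide)
  have "norm ((a - h *\<^sub>R D) /\<^sub>R norm h) = norm (a - h *\<^sub>R D) / \<bar>h\<bar>" by (simp add: divide_inverse)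
  moreover have "norm ((1/h) *\<^sub>R (a - h *\<^sub>R D)) = norm (a - h *\<^sub>R D) / \<bar>h\<bar>" by simp
  ultimately show ?thesis using \<open>a /\<^sub>R h - D = _\<close> by simp
qed

lemma vd_quot_iff:
  fixes f :: "real \<Rightarrow> 'a::real_normed_vector"
  shows "(f has_vector_derivative D) (at x) \<longleftrightarrow> ((\<lambda>y. (f y - f x) /\<^sub>R (y - x)) \<longlongrightarrow> D) (at x)"
proof -
  have ev: "\<forall>\<^sub>F y in at x. norm (((f y - f x) - (y - x) *\<^sub>R D) /\<^sub>R norm (y - x)) = norm ((f y - f x) /\<^sub>R (y - x) - D)"
    unfolding eventually_at_filter by (intro always_eventually allI impI quot_norm_eq) simp
  have "(f has_vector_derivative D) (at x) \<longleftrightarrow> ((\<lambda>y. ((f y - f x) - (y - x) *\<^sub>R D) /\<^sub>R norm (y - x)) \<longlongrightarrow> 0) (at x)"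
    unfolding has_vector_derivative_def has_derivative_at_within
    by (simp add: bounded_linear_scaleR_left)
  also have "\<dots> \<longleftrightarrow> ((\<lambda>y. norm (((f y - f x) - (y - x) *\<^sub>R D) /\<^sub>R norm (y - x))) \<longlongrightarrow> 0) (at x)"
    by (rule tendsto_norm_zero_iff[symmetric])
  also have "\<dots> \<longleftrightarrow> ((\<lambda>y. norm ((f y - f x) /\<^sub>R (y - x) - D)) \<longlongrightarrow> 0) (at x)"
    by (rule tendsto_cong[OF ev])
  also have "\<dots> \<longleftrightarrow> ((\<lambda>y. (f y - f x) /\<^sub>R (y - x)) \<longlongrightarrow> D) (at x)"
    by (simp add: tendsto_norm_zero_iff LIM_zero_iff)
  finally show ?thesis .
qed

lemma inv_cont:
  fixes G P :: "real \<Rightarrow> 'a::real_normed_algebra_1"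
  assumes cG: "isCont G x"
    and ev: "\<forall>\<^sub>F y in nhds x. G y * P y = 1 \<and> P y * G y = 1"
  shows "isCont P x"
proof -
  have inv0: "G x * P x = 1" "P x * G x = 1" using eventually_nhds_x_imp_x[OF ev] by auto
  have ev': "\<forall>\<^sub>F y in at x. G y * P y = 1 \<and> P y * G y = 1"
    using ev by (auto simp: eventually_at_filter elim: eventually_mono)
  define c where "c = norm (P x)"
  have ev2: "\<forall>\<^sub>F y in at x. norm (G y - G x) * c < 1/2"
  proof (cases "c = 0")
    case True thus ?thesis by simp
  next
    case False
    hence "c > 0" by (simp add: c_def)
    have "((\<lambda>y. norm (G y - G x)) \<longlongrightarrow> 0) (at x)"
      using cG by (simp add: isCont_def tendsto_norm_zero_iff LIM_zero_iff)
    hence "\<forall>\<^sub>F y in at x. norm (G y - G x) < 1/(2*c)"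
      using \<open>c > 0\<close> by (intro order_tendstoD) auto
    thus ?thesis
      by eventually_elim (use \<open>c > 0\<close> in \<open>auto simp: field_simps\<close>)
  qed
  have bound: "\<forall>\<^sub>F y in at x. norm (P y - P x) \<le> 2 * c * c * norm (G y - G x)"
    using ev2 ev' 
  proof eventually_elim
    case (elim y)
    hence i1: "G y * P y = 1" "P y * G y = 1" by auto
    have "P y * (G x - G y) * P x = P y * (G x * P x) - (P y * G y) * P x"
      by (simp add: algebra_simps mult.assoc)
    hence eq: "P y - P x = P y * (G x - G y) * P x"
      using i1 inv0 by simp
    have n1: "norm (P y - P x) \<le> norm (P y) * norm (G y - G x) * c"
    proof -
      have "norm (P y - P x) \<le> norm (P y) * norm (G x - G y) * norm (P x)"
        unfolding eq by (meson norm_mult_ineq order_trans mult_right_mono norm_ge_zero)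
      thus ?thesis by (simp add: c_def norm_minus_commute)
    qed
    have n2: "norm (P y) \<le> c + norm (P y - P x)"
      using norm_triangle_ineq[of "P x" "P y - P x"] by (simp add: c_def)
    define h where "h = norm (G y - G x)"
    have h0: "h \<ge> 0" and hc: "h * c < 1/2" using elim by (auto simp: h_def)
    have c0: "c \<ge> 0" by (simp add: c_def)
    have "norm (P y - P x) \<le> (c + norm (P y - P x)) * h * c"
      using n1 n2 h0 c0 unfolding h_def[symmetric]
      by (meson mult_right_mono order_trans zero_le_mult_iff)
    hence "norm (P y - P x) * (1 - h * c) \<le> c * h * c" by (simp add: algebra_simps)
    hence "norm (P y - P x) * (1/2) \<le> c * h * c"
    proof -
      have "norm (P y - P x) * (1/2) \<le> norm (P y - P x) * (1 - h * c)"
        using hc by (intro mult_left_mono) auto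
      thus ?thesis using \<open>norm (P y - P x) * (1 - h * c) \<le> c * h * c\<close> by linarith
    qed
    thus ?case by (simp add: h_def algebra_simps)
  qed
  have lim2: "((\<lambda>y. 2 * c * c * norm (G y - G x)) \<longlongrightarrow> 0) (at x)"
    using cG by (auto simp: isCont_def tendsto_norm_zero_iff LIM_zero_iff intro!: tendsto_mult_right_zero)
  have "((\<lambda>y. norm (P y - P x)) \<longlongrightarrow> 0) (at x)"
    by (rule tendsto_sandwich[where f="\<lambda>_. 0", OF _ bound tendsto_const lim2]) simp
  thus ?thesis by (simp add: isCont_def tendsto_norm_zero_iff LIM_zero_iff)
qed

lemma inv_deriv:
  fixes G P :: "real \<Rightarrow> 'a::real_normed_algebra_1"
  assumes dG: "(G has_vector_derivative G') (at x)"
    and ev: "\<forall>\<^sub>F y in nhds x. G y * P y = 1 \<and> P y * G y = 1"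
  shows "(P has_vector_derivative (- (P x * G' * P x))) (at x)"
proof -
  have inv0: "G x * P x = 1" "P x * G x = 1" using eventually_nhds_x_imp_x[OF ev] by auto
  have ev': "\<forall>\<^sub>F y in at x. G y * P y = 1 \<and> P y * G y = 1"
    using ev by (auto simp: eventually_at_filter elim: eventually_mono)
  have cP: "isCont P x"
    by (rule inv_cont[OF _ ev]) (use dG has_vector_derivative_continuous in auto)
  have qG: "((\<lambda>y. (G y - G x) /\<^sub>R (y - x)) \<longlongrightarrow> G') (at x)"
    using dG vd_quot_iff by blast
  have lim: "((\<lambda>y. - (P y * ((G y - G x) /\<^sub>R (y - x)) * P x)) \<longlongrightarrow> - (P x * G' * P x)) (at x)"
    using cP qG by (intro tendsto_intros) (auto simp: isCont_def)
  have evq: "\<forall>\<^sub>F y in at x. - (P y * ((G y - G x) /\<^sub>R (y - x)) * P x) = (P y - P x) /\<^sub>R (y - x)"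
    using ev' 
  proof eventually_elim
    case (elim y)
    hence i1: "G y * P y = 1" "P y * G y = 1" by auto
    have "P y * (G x - G y) * P x = P y * (G x * P x) - (P y * G y) * P x"
      by (simp add: algebra_simps mult.assoc)
    hence eq: "P y - P x = - (P y * (G y - G x) * P x)"
      using i1 inv0 by (simp add: algebra_simps)
    show ?case unfolding eq by (simp add: mult_scaleR_left mult_scaleR_right)
  qed
  show ?thesis unfolding vd_quot_iff
    using Lim_transform_eventually[OF lim evq] .
qed




lemma continuous_on_det: "continuous_on UNIV (\<lambda>A::complex^'n::finite^'n. det A)"
proof -
  have ent: "continuous_on UNIV (\<lambda>A::complex^'n^'n. A $ i $ j)" for i j
    by (intro linear_continuous_on bounded_linear_compose[OF bounded_linear_vec_nth bounded_linear_vec_nth])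
  show ?thesis unfolding det_def
    by (intro continuous_intros ent)
qed

lemma open_invertible:
  fixes f :: "real \<Rightarrow> 'n::finite sq"
  assumes "continuous_on UNIV f"
  shows "open {y. invertible (Rep_sq (f y))}"
proof -
  have c: "continuous_on UNIV (\<lambda>y. det (Rep_sq (f y)))"
    using continuous_on_compose2[OF continuous_on_det continuous_on_compose2[OF linear_continuous_on[OF bl_Rep] assms]]
    by auto
  show ?thesis unfolding invertible_det_nz
    by (rule open_Collect_neq[OF c continuous_on_const])
qed

definition sqinv :: "'n::finite sq \<Rightarrow> 'n sq" where
  "sqinv z = Abs_sq (matrix_inv (Rep_sq z))"

lemma sqinv: assumes "invertible (Rep_sq z)" shows "z * sqinv z = 1" "sqinv z * z = 1"
proof -
  have "Rep_sq z ** matrix_inv (Rep_sq z) = mat 1 \<and> matrix_inv (Rep_sq z) ** Rep_sq z = mat 1"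
    using assms unfolding invertible_def matrix_inv_def by (rule someI_ex)
  thus "z * sqinv z = 1" "sqinv z * z = 1"
    unfolding sqinv_def by (auto simp: Rep_sq_inject[symmetric] Rep_mult Rep_one Abs_sq_inverse)
qed



definition Ea :: "'n::finite sq \<Rightarrow> real \<Rightarrow> real \<Rightarrow> 'n sq" where
  "Ea s y t = exp (y *\<^sub>R ((-2) *\<^sub>R s) + t *\<^sub>R ((-2) *\<^sub>R (s * s * s)))"
definition Ei :: "'n::finite sq \<Rightarrow> real \<Rightarrow> real \<Rightarrow> 'n sq" where
  "Ei s y t = exp (- (y *\<^sub>R ((-2) *\<^sub>R s) + t *\<^sub>R ((-2) *\<^sub>R (s * s * s))))"

lemma Ea_Ei: "Ea s y t * Ei s y t = 1" "Ei s y t * Ea s y t = 1"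
proof -
  show "Ea s y t * Ei s y t = 1" unfolding Ea_def Ei_def by (rule exp_minus_inverse)
  show "Ei s y t * Ea s y t = 1" unfolding Ea_def Ei_def
    using exp_minus_inverse[of "- (y *\<^sub>R ((-2) *\<^sub>R s) + t *\<^sub>R ((-2) *\<^sub>R (s * s * s)))"]
    unfolding minus_minus .
qed

lemma expab_split:
  fixes a b :: "'a::{real_normed_algebra_1,banach}"
  assumes "a * b = b * a"
  shows "exp (y *\<^sub>R a + t *\<^sub>R b) = exp (y *\<^sub>R a) * exp (t *\<^sub>R b)"
  by (rule exp_add_commuting) (simp add: assms)

lemma expab_dy:
  fixes a b :: "'a::{real_normed_algebra_1,banach}"
  assumes ab: "a * b = b * a"
  shows "((\<lambda>y. exp (y *\<^sub>R a + t *\<^sub>R b)) has_vector_derivative exp (y *\<^sub>R a + t *\<^sub>R b) * a) (at y)"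
proof -
  have "((\<lambda>y. exp (y *\<^sub>R a) * exp (t *\<^sub>R b)) has_vector_derivative
         exp (y *\<^sub>R a) * a * exp (t *\<^sub>R b)) (at y)"
    by (intro has_vector_derivative_mult_left exp_scaleR_has_vector_derivative_right)
  moreover have "exp (y *\<^sub>R a) * a * exp (t *\<^sub>R b) = exp (y *\<^sub>R a) * exp (t *\<^sub>R b) * a"
    unfolding mult.assoc
    by (subst exp_commute[of a]) (simp_all add: ab)
  ultimately show ?thesis unfolding expab_split[OF ab] by simp
qed

lemma expab_dt:
  fixes a b :: "'a::{real_normed_algebra_1,banach}"
  assumes ab: "a * b = b * a"
  shows "((\<lambda>t. exp (y *\<^sub>R a + t *\<^sub>R b)) has_vector_derivative exp (y *\<^sub>R a + t *\<^sub>R b) * b) (at t)"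
proof -
  have "((\<lambda>t. exp (y *\<^sub>R a) * exp (t *\<^sub>R b)) has_vector_derivative
         exp (y *\<^sub>R a) * (exp (t *\<^sub>R b) * b)) (at t)"
    by (intro has_vector_derivative_mult_right exp_scaleR_has_vector_derivative_right)
  thus ?thesis unfolding expab_split[OF ab] by (simp add: mult.assoc)
qed

lemma s3_comm: "(c *\<^sub>R s) * (e *\<^sub>R (s * s * s)) = (e *\<^sub>R (s * s * s)) * (c *\<^sub>R (s::'n::finite sq))"
  by (simp add: mult.assoc)

lemma Ei_alt: "Ei s y t = exp (y *\<^sub>R (2 *\<^sub>R s) + t *\<^sub>R (2 *\<^sub>R (s * s * s)))"
  unfolding Ei_def by (rule arg_cong[where f=exp]) (simp add: algebra_simps)

lemma Ei_comm: "Ei s y t * s = s * Ei s y t"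
  unfolding Ei_alt by (rule exp_commute[symmetric]) (simp add: distrib_left distrib_right mult.assoc)

lemma Ei_dy: "((\<lambda>y. Ei s y t) has_vector_derivative Ei s y t * (2 *\<^sub>R s)) (at y)"
  unfolding Ei_alt by (rule expab_dy[OF s3_comm])

lemma Ei_dt: "((\<lambda>t. Ei s y t) has_vector_derivative Ei s y t * (2 *\<^sub>R (s * s * s))) (at t)"
  unfolding Ei_alt by (rule expab_dt[OF s3_comm])

lemma Ea_cont_y: "continuous_on UNIV (\<lambda>y. Ea s y t)"
  unfolding Ea_def
  by (rule continuous_on_vector_derivative, rule expab_dy[OF s3_comm])

lemma Ea_cont_t: "continuous_on UNIV (\<lambda>t. Ea s y t)"
  unfolding Ea_def
  by (rule continuous_on_vector_derivative, rule expab_dt[OF s3_comm])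




definition "F1 s d p = - (s * p + p * s) - p * d * p"
definition "DF1 s d p q = - (s * q + q * s) - (q * d * p + p * d * q)"
definition "F2 s d p = DF1 s d p (F1 s d p)"
definition "F3 s d p = - (s * F2 s d p + F2 s d p * s) - (F2 s d p * d * p + F1 s d p * d * F1 s d p + F1 s d p * d * F1 s d p + p * d * F2 s d p)"
definition "F4 s d p = - (s * F3 s d p + F3 s d p * s) - (F3 s d p * d * p + (F2 s d p * d * F1 s d p + F2 s d p * d * F1 s d p + F2 s d p * d * F1 s d p) + (F1 s d p * d * F2 s d p + F1 s d p * d * F2 s d p + F1 s d p * d * F2 s d p) + p * d * F3 s d p)"
definition "FT s d p = - (s * s * s * p + p * s * s * s) - p * (s * s * d - s * d * s + d * s * s) * p"
definition "FQ s d p = DF1 s d p (FT s d p)"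

lemmas vdr = has_vector_derivative_diff has_vector_derivative_minus has_vector_derivative_add
  has_vector_derivative_mult_right has_vector_derivative_mult_left has_vector_derivative_mult

lemma vd_eq: "(f has_vector_derivative a) F \<Longrightarrow> a = b \<Longrightarrow> (f has_vector_derivative b) F" by simp

context fixes s d :: "'a::real_normed_algebra" begin

lemma d_F1:
  assumes "(P has_vector_derivative P') (at y)"
  shows "((\<lambda>y. F1 s d (P y)) has_vector_derivative DF1 s d (P y) P') (at y)"
  unfolding F1_def
  apply (rule vd_eq)
   apply (rule vdr assms)+
  by (simp add: DF1_def algebra_simps)

lemma d_F2:
  assumes dP: "(P has_vector_derivative F1 s d (P y)) (at y)"
  shows "((\<lambda>y. F2 s d (P y)) has_vector_derivative F3 s d (P y)) (at y)"
proof -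
  have d1: "((\<lambda>y. F1 s d (P y)) has_vector_derivative F2 s d (P y)) (at y)"
    using d_F1[OF dP] by (simp add: F2_def)
  show ?thesis
    unfolding F2_def DF1_def
    apply (rule vd_eq)
     apply (rule vdr dP d1)+
    by (simp add: F3_def algebra_simps)
qed

lemma d_F3:
  assumes dP: "(P has_vector_derivative F1 s d (P y)) (at y)"
  shows "((\<lambda>y. F3 s d (P y)) has_vector_derivative F4 s d (P y)) (at y)"
proof -
  have d1: "((\<lambda>y. F1 s d (P y)) has_vector_derivative F2 s d (P y)) (at y)"
    using d_F1[OF dP] by (simp add: F2_def)
  have d2: "((\<lambda>y. F2 s d (P y)) has_vector_derivative F3 s d (P y)) (at y)"
    by (rule d_F2[OF dP])
  show ?thesis
    unfolding F3_def
    apply (rule vd_eq)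
     apply (rule vdr dP d1 d2)+
    by (simp add: F4_def algebra_simps)
qed

lemma d_F1sq:
  assumes dP: "(P has_vector_derivative F1 s d (P y)) (at y)"
  shows "((\<lambda>y. F1 s d (P y) * d * F1 s d (P y)) has_vector_derivative
            F2 s d (P y) * d * F1 s d (P y) + F1 s d (P y) * d * F2 s d (P y)) (at y)"
proof -
  have d1: "((\<lambda>y. F1 s d (P y)) has_vector_derivative F2 s d (P y)) (at y)"
    using d_F1[OF dP] by (simp add: F2_def)
  show ?thesis
    apply (rule vd_eq)
     apply (rule vdr d1)+
    by (simp add: algebra_simps)
qed

lemma d_FQ:
  assumes dP: "(P has_vector_derivative FT s d (P y)) (at y)"
  shows "((\<lambda>y. F1 s d (P y)) has_vector_derivative FQ s d (P y)) (at y)"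
  using d_F1[OF dP] by (simp add: FQ_def)

end

lemma alg_x:
  fixes P G E k s :: "'a::real_algebra_1"
  assumes PG: "P * G = 1" and GP: "G * P = 1" and G: "G = E - k" and Es: "E * s = s * E"
  shows "- (P * (E * (2 *\<^sub>R s)) * P) = F1 s (s * k + k * s) P"
proof -
  have E: "E = G + k" using G by simp
  have 1: "P * E * s * P = s * P + P * k * s * P"
    unfolding E using PG GP by (simp add: algebra_simps flip: mult.assoc)
  have 2: "P * E * s * P = P * s + P * s * k * P"
  proof -
    have "P * E * s * P = P * s * E * P" by (simp add: mult.assoc Es)
    also have "\<dots> = P * s + P * s * k * P"
      unfolding E using GP by (simp add: algebra_simps mult.assoc)
    finally show ?thesis .
  qed
  have "P * (E * (2 *\<^sub>R s)) * P = P * E * s * P + P * E * s * P"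
    by (simp add: scaleR_2 algebra_simps)
  also have "\<dots> = s * P + P * k * s * P + (P * s + P * s * k * P)" using 1 2 by simp
  finally show ?thesis unfolding F1_def by (simp add: algebra_simps)
qed

lemma alg_t:
  fixes P G E k s :: "'a::real_algebra_1"
  assumes PG: "P * G = 1" and GP: "G * P = 1" and G: "G = E - k" and Es: "E * s = s * E"
  shows "- (P * (E * (2 *\<^sub>R (s * s * s))) * P) = FT s (s * k + k * s) P"
proof -
  have E: "E = G + k" using G by simp
  have Es3: "E * (s * s * s) = (s * s * s) * E" by (simp add: Es flip: mult.assoc) (simp add: mult.assoc Es)
  have 1: "P * E * (s * s * s) * P = s * s * s * P + P * k * (s * s * s) * P"
    unfolding E using PG GP by (simp add: algebra_simps flip: mult.assoc)
  have 2: "P * E * (s * s * s) * P = P * (s * s * s) + P * (s * s * s) * k * P"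
  proof -
    have "P * E * (s * s * s) * P = P * (s * s * s) * E * P" by (metis Es3 mult.assoc)
    also have "\<dots> = P * (s * s * s) + P * (s * s * s) * k * P"
      unfolding E using GP by (simp add: algebra_simps mult.assoc)
    finally show ?thesis .
  qed
  have "P * (E * (2 *\<^sub>R (s * s * s))) * P = P * E * (s * s * s) * P + P * E * (s * s * s) * P"
    by (simp add: scaleR_2 algebra_simps)
  also have "\<dots> = s * s * s * P + P * k * (s * s * s) * P + (P * (s * s * s) + P * (s * s * s) * k * P)" using 1 2 by simp
  finally show ?thesis unfolding FT_def by (simp add: algebra_simps)
qed

lemma alg_rel:
  fixes P G E k s :: "'a::ring_1"
  assumes PG: "P * G = 1" and GP: "G * P = 1" and G: "G = E - k" and Es: "E * s = s * E"
  shows "P * s * s = s * s * P - P * s * (s * k + k * s) * P + P * (s * k + k * s) * s * P"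
proof -
  have E: "E = G + k" using G by simp
  have Es2: "E * (s * s) = (s * s) * E" by (simp add: Es flip: mult.assoc) (simp add: mult.assoc Es)
  have "s * s * P - P * s * s = P * (G * (s * s)) * P - P * ((s * s) * G) * P"
    using PG GP by (simp add: mult.assoc) (simp flip: mult.assoc)
  also have "\<dots> = P * (s * s * k - k * s * s) * P"
    using Es2 unfolding G by (simp add: algebra_simps mult.assoc)
  finally have "s * s * P - P * s * s = P * (s * s * k - k * s * s) * P" .
  thus ?thesis by (simp add: algebra_simps)
qed

lemma kdv_alg:
  fixes s d p :: "'a::ring_1"
  assumes rel: "p * s * s = s * s * p - p * s * d * p + p * d * s * p"
  shows "FQ s d p + FQ s d p + FQ s d p + FQ s d p = F4 s d p +
     ((F2 s d p * d * F1 s d p + F1 s d p * d * F2 s d p) + (F2 s d p * d * F1 s d p + F1 s d p * d * F2 s d p)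
     + (F2 s d p * d * F1 s d p + F1 s d p * d * F2 s d p) + (F2 s d p * d * F1 s d p + F1 s d p * d * F2 s d p)
     + (F2 s d p * d * F1 s d p + F1 s d p * d * F2 s d p) + (F2 s d p * d * F1 s d p + F1 s d p * d * F2 s d p))"
proof -
  have r1: "\<And>X. p * (s * (s * X)) = s * (s * (p * X)) - p * (s * (d * (p * X))) + p * (d * (s * (p * X)))"
    using rel by (metis (no_types, lifting) mult.assoc left_diff_distrib distrib_right)
  have r0: "p * (s * s) = s * (s * p) - p * (s * (d * p)) + p * (d * (s * p))"
    using rel by (simp add: mult.assoc)
  show ?thesis
    unfolding FQ_def FT_def F4_def F3_def F2_def DF1_def F1_def
    by (simp add: algebra_simps r1 r0)
qed




lemma linear_UV: "linear (\<lambda>X::complex^'n::finite^'n. (U::complex^'n^'m::finite) ** X ** (V::complex^'m^'n))"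
  by (rule linearI) (simp_all add: matrix_add_ldistrib mm_rdistrib scalar_matrix_assoc matrix_scalar_ac)

lemma bl_LL: "bounded_linear (\<lambda>w::'n::finite sq. (U::complex^'n^'m::finite) ** Rep_sq w ** (V::complex^'m^'n))"
proof -
  have "bounded_linear (\<lambda>X::complex^'n^'n. U ** X ** V)"
    using linear_UV linear_conv_bounded_linear by blast
  from bounded_linear_compose[OF this bl_Rep] show ?thesis by simp
qed

theorem mainTheorem17:
  fixes S :: "complex^'n^'n" and U :: "complex^'n^'m" and V :: "complex^'m^'n"
    and K :: "complex^'n^'n" and Xi :: "real \<Rightarrow> real \<Rightarrow> complex^'n^'n"
    and phi u :: "real \<Rightarrow> real \<Rightarrow> complex^'m^'m"
    and x t :: real
  assumes sylv: "S ** K + K ** S = V ** U"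
    and Xi_def: "Xi = (\<lambda>x t. mexp (- 2 *\<^sub>R (x *\<^sub>R S + t *\<^sub>R (S ** S ** S))))"
    and phi_def: "phi = (\<lambda>x t. U ** Xi x t ** matrix_inv (mat 1 - K ** Xi x t) ** V)"
    and u_def: "u = pdx phi"
    and inv: "invertible (mat 1 - K ** Xi x t)"
  shows "((\<lambda>y. phi y t) has_vector_derivative u x t) (at x)
       \<and> ((\<lambda>y. u y t) has_vector_derivative pdx u x t) (at x)
       \<and> ((\<lambda>y. pdx u y t) has_vector_derivative pdx (pdx u) x t) (at x)
       \<and> ((\<lambda>y. pdx (pdx u) y t) has_vector_derivative pdx (pdx (pdx u)) x t) (at x)
       \<and> ((\<lambda>s. u x s) has_vector_derivative pdt u x t) (at t)
       \<and> ((\<lambda>y. u y t ** u y t) has_vector_derivative pdx (\<lambda>y s. u y s ** u y s) x t) (at x)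
       \<and> pdt u x t - (1/4) *\<^sub>R pdx (pdx (pdx u)) x t
           - (3/2) *\<^sub>R pdx (\<lambda>y s. u y s ** u y s) x t = 0"
proof -
  define sg where "sg = Abs_sq S"
  define kk where "kk = Abs_sq K"
  define dd where "dd = Abs_sq (V ** U)"
  define P where "P = (\<lambda>y s. Ea sg y s * sqinv (1 - kk * Ea sg y s))"
  define G where "G = (\<lambda>y s. Ei sg y s - kk)"
  define LL where "LL = (\<lambda>w. U ** Rep_sq w ** V)"
  have blLL: "bounded_linear LL" unfolding LL_def by (rule bl_LL)
  have lin: "linear LL" using blLL bounded_linear.linear by blast
  have LLmul: "\<And>a b. LL a ** LL b = LL (a * dd * b)"
    unfolding LL_def dd_def by (simp add: Rep_simps matrix_mul_assoc)
  have dd_eq: "dd = sg * kk + kk * sg"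
    using sylv unfolding dd_def sg_def kk_def by (simp add: Rep_sq_inject[symmetric] Rep_simps)
  have arg_eq: "Abs_sq (- 2 *\<^sub>R (y *\<^sub>R S + s *\<^sub>R (S ** S ** S)))
      = y *\<^sub>R ((-2) *\<^sub>R sg) + s *\<^sub>R ((-2) *\<^sub>R (sg * sg * sg))" for y s
    unfolding sg_def by (simp add: Rep_sq_inject[symmetric] Rep_simps algebra_simps matrix_mul_assoc)
  have Xi_eq: "Xi y s = Rep_sq (Ea sg y s)" for y s
    unfolding Xi_def Ea_def mexp_Rep arg_eq ..
  have z_eq: "mat 1 - K ** Xi y s = Rep_sq (1 - kk * Ea sg y s)" for y s
    by (simp add: Xi_eq Rep_simps kk_def)
  have phi_eq: "phi y s = LL (P y s)" for y s
    unfolding phi_def LL_def P_def z_eq Xi_eq by (simp add: sqinv_def Rep_simps matrix_mul_assoc kk_def)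
  have PG: "G y s * P y s = 1 \<and> P y s * G y s = 1" if inv: "invertible (Rep_sq (1 - kk * Ea sg y s))" for y s
  proof -
    let ?z = "1 - kk * Ea sg y s"
    let ?w = "sqinv ?z"
    have zw: "?z * ?w = 1" "?w * ?z = 1" using sqinv[OF inv] by auto
    have Gz: "G y s = ?z * Ei sg y s" unfolding G_def using Ea_Ei(1)[of sg y s]
      by (simp add: algebra_simps mult.assoc)
    have "G y s * P y s = ?z * (Ei sg y s * Ea sg y s) * ?w" unfolding Gz P_def by (simp add: mult.assoc)
    also have "\<dots> = 1" by (simp only: Ea_Ei(2) mult_1_right zw(1))
    finally have 1: "G y s * P y s = 1" .
    have "P y s * G y s = Ea sg y s * (?w * ?z) * Ei sg y s" unfolding Gz P_def by (simp add: mult.assoc)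
    also have "\<dots> = 1" by (simp only: Ea_Ei(1) mult_1_right zw(2))
    finally show ?thesis using 1 by simp
  qed
  have cont_y: "continuous_on UNIV (\<lambda>y. 1 - kk * Ea sg y s)" for s
    by (intro continuous_intros Ea_cont_y)
  have cont_t: "continuous_on UNIV (\<lambda>s. 1 - kk * Ea sg y s)" for y
    by (intro continuous_intros Ea_cont_t)
  have open_y: "open {y. invertible (Rep_sq (1 - kk * Ea sg y s))}" for s
    by (rule open_invertible[OF cont_y])
  have open_t: "open {s. invertible (Rep_sq (1 - kk * Ea sg y s))}" for y
    by (rule open_invertible[OF cont_t])
  have dPy: "((\<lambda>y. P y s) has_vector_derivative F1 sg dd (P y s)) (at y)"
    if inv: "invertible (Rep_sq (1 - kk * Ea sg y s))" for y s
  proof -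
    have "\<forall>\<^sub>F y' in nhds y. invertible (Rep_sq (1 - kk * Ea sg y' s))"
      using eventually_nhds_in_open[OF open_y[of s]] inv by simp
    hence ev: "\<forall>\<^sub>F y' in nhds y. G y' s * P y' s = 1 \<and> P y' s * G y' s = 1"
      by (rule eventually_mono) (rule PG)
    have dG: "((\<lambda>y. G y s) has_vector_derivative Ei sg y s * (2 *\<^sub>R sg)) (at y)"
      unfolding G_def using has_vector_derivative_diff[OF Ei_dy has_vector_derivative_const] by simp
    have "((\<lambda>y. P y s) has_vector_derivative - (P y s * (Ei sg y s * (2 *\<^sub>R sg)) * P y s)) (at y)"
      by (rule inv_deriv[OF dG ev])
    moreover have "- (P y s * (Ei sg y s * (2 *\<^sub>R sg)) * P y s) = F1 sg dd (P y s)"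
      unfolding dd_eq by (rule alg_x[of "P y s" "G y s" "Ei sg y s" kk sg]) (use PG[OF inv] Ei_comm in \<open>auto simp: G_def\<close>)
    ultimately show ?thesis by simp
  qed
  have dPt: "((\<lambda>s. P y s) has_vector_derivative FT sg dd (P y s)) (at s)"
    if inv: "invertible (Rep_sq (1 - kk * Ea sg y s))" for y s
  proof -
    have "\<forall>\<^sub>F s' in nhds s. invertible (Rep_sq (1 - kk * Ea sg y s'))"
      using eventually_nhds_in_open[OF open_t[of y]] inv by simp
    hence ev: "\<forall>\<^sub>F s' in nhds s. G y s' * P y s' = 1 \<and> P y s' * G y s' = 1"
      by (rule eventually_mono) (rule PG)
    have dG: "((\<lambda>s. G y s) has_vector_derivative Ei sg y s * (2 *\<^sub>R (sg * sg * sg))) (at s)"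
      unfolding G_def using has_vector_derivative_diff[OF Ei_dt has_vector_derivative_const] by simp
    have "((\<lambda>s. P y s) has_vector_derivative - (P y s * (Ei sg y s * (2 *\<^sub>R (sg * sg * sg))) * P y s)) (at s)"
      by (rule inv_deriv[OF dG ev])
    moreover have "- (P y s * (Ei sg y s * (2 *\<^sub>R (sg * sg * sg))) * P y s) = FT sg dd (P y s)"
      unfolding dd_eq by (rule alg_t[of "P y s" "G y s" "Ei sg y s" kk sg]) (use PG[OF inv] Ei_comm in \<open>auto simp: G_def\<close>)
    ultimately show ?thesis by simp
  qed
  have relP: "P y s * sg * sg = sg * sg * P y s - P y s * sg * dd * P y s + P y s * dd * sg * P y s"
    if inv: "invertible (Rep_sq (1 - kk * Ea sg y s))" for y s
    unfolding dd_eq by (rule alg_rel[of "P y s" "G y s" "Ei sg y s" kk sg]) (use PG[OF inv] Ei_comm in \<open>auto simp: G_def\<close>)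
  have dphi: "((\<lambda>y. phi y s) has_vector_derivative LL (F1 sg dd (P y s))) (at y)"
    if inv: "invertible (Rep_sq (1 - kk * Ea sg y s))" for y s
    unfolding phi_eq using bounded_linear.has_vector_derivative[OF blLL dPy[OF inv]] .
  have u_eq: "u y s = LL (F1 sg dd (P y s))"
    if inv: "invertible (Rep_sq (1 - kk * Ea sg y s))" for y s
    using dphi[OF inv] by (simp add: u_def pdx_def vector_derivative_at)
  define Oy where "Oy = {y. invertible (Rep_sq (1 - kk * Ea sg y t))}"
  have oO: "open Oy" unfolding Oy_def by (rule open_y)
  have xO: "x \<in> Oy" using inv unfolding Oy_def z_eq by simp
  have du: "((\<lambda>y. u y t) has_vector_derivative LL (F2 sg dd (P y t))) (at y)" if yO: "y \<in> Oy" for y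
  proof -
    have "((\<lambda>y. LL (F1 sg dd (P y t))) has_vector_derivative LL (F2 sg dd (P y t))) (at y)"
      using bounded_linear.has_vector_derivative[OF blLL d_F1[OF dPy]] yO
      by (simp add: F2_def Oy_def)
    thus ?thesis
      by (rule has_vector_derivative_transform_within_open[OF _ oO yO]) (simp add: u_eq Oy_def)
  qed
  have pu: "pdx u y t = LL (F2 sg dd (P y t))" if "y \<in> Oy" for y
    using du[OF that] by (simp add: pdx_def vector_derivative_at)
  have ddu: "((\<lambda>y. pdx u y t) has_vector_derivative LL (F3 sg dd (P y t))) (at y)" if yO: "y \<in> Oy" for y
  proof -
    have "((\<lambda>y. LL (F2 sg dd (P y t))) has_vector_derivative LL (F3 sg dd (P y t))) (at y)"
      using bounded_linear.has_vector_derivative[OF blLL d_F2[OF dPy]] yO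
      by (simp add: Oy_def)
    thus ?thesis
      by (rule has_vector_derivative_transform_within_open[OF _ oO yO]) (simp add: pu)
  qed
  have ppu: "pdx (pdx u) y t = LL (F3 sg dd (P y t))" if "y \<in> Oy" for y
    using ddu[OF that] by (simp add: pdx_def vector_derivative_at)
  have dddu: "((\<lambda>y. pdx (pdx u) y t) has_vector_derivative LL (F4 sg dd (P x t))) (at x)"
  proof -
    have "((\<lambda>y. LL (F3 sg dd (P y t))) has_vector_derivative LL (F4 sg dd (P x t))) (at x)"
      using bounded_linear.has_vector_derivative[OF blLL d_F3[OF dPy]] xO
      by (simp add: Oy_def)
    thus ?thesis
      by (rule has_vector_derivative_transform_within_open[OF _ oO xO]) (simp add: ppu)
  qed
  have du2: "((\<lambda>y. u y t ** u y t) has_vector_derivative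
      LL (F2 sg dd (P x t) * dd * F1 sg dd (P x t) + F1 sg dd (P x t) * dd * F2 sg dd (P x t))) (at x)"
  proof -
    have "((\<lambda>y. LL (F1 sg dd (P y t) * dd * F1 sg dd (P y t))) has_vector_derivative
      LL (F2 sg dd (P x t) * dd * F1 sg dd (P x t) + F1 sg dd (P x t) * dd * F2 sg dd (P x t))) (at x)"
      using bounded_linear.has_vector_derivative[OF blLL d_F1sq[OF dPy]] xO
      by (simp add: Oy_def)
    thus ?thesis
      by (rule has_vector_derivative_transform_within_open[OF _ oO xO]) (simp add: u_eq Oy_def LLmul)
  qed
  define Ot where "Ot = {s. invertible (Rep_sq (1 - kk * Ea sg x s))}"
  have oOt: "open Ot" unfolding Ot_def by (rule open_t)
  have tOt: "t \<in> Ot" using inv unfolding Ot_def z_eq by simp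
  have dut: "((\<lambda>s. u x s) has_vector_derivative LL (FQ sg dd (P x t))) (at t)"
  proof -
    have "((\<lambda>s. LL (F1 sg dd (P x s))) has_vector_derivative LL (FQ sg dd (P x t))) (at t)"
      using bounded_linear.has_vector_derivative[OF blLL d_FQ[OF dPt]] tOt
      by (simp add: Ot_def)
    thus ?thesis
      by (rule has_vector_derivative_transform_within_open[OF _ oOt tOt]) (simp add: u_eq Ot_def)
  qed
  have e1: "u x t = LL (F1 sg dd (P x t))" using xO u_eq by (simp add: Oy_def)
  have e2: "pdx u x t = LL (F2 sg dd (P x t))" using pu[OF xO] .
  have e3: "pdx (pdx u) x t = LL (F3 sg dd (P x t))" using ppu[OF xO] .
  have e4: "pdx (pdx (pdx u)) x t = LL (F4 sg dd (P x t))"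
    using dddu by (simp add: pdx_def vector_derivative_at)
  have e5: "pdt u x t = LL (FQ sg dd (P x t))"
    using dut by (simp add: pdt_def vector_derivative_at)
  have e6: "pdx (\<lambda>y s. u y s ** u y s) x t =
      LL (F2 sg dd (P x t) * dd * F1 sg dd (P x t) + F1 sg dd (P x t) * dd * F2 sg dd (P x t))"
    using du2 by (simp add: pdx_def vector_derivative_at)
  have xinv: "invertible (Rep_sq (1 - kk * Ea sg x t))" using xO by (simp add: Oy_def)
  define p where "p = P x t"
  define X where "X = F2 sg dd p * dd * F1 sg dd p + F1 sg dd p * dd * F2 sg dd p"
  have kdv: "FQ sg dd p + FQ sg dd p + FQ sg dd p + FQ sg dd p = F4 sg dd p + (X + X + X + X + X + X)"
    using kdv_alg[OF relP[OF xinv]] unfolding p_def X_def .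
  have zero: "FQ sg dd p - (1/4) *\<^sub>R F4 sg dd p - (3/2) *\<^sub>R X = 0"
  proof -
    have h4: "(4::real) *\<^sub>R FQ sg dd p = FQ sg dd p + FQ sg dd p + FQ sg dd p + FQ sg dd p"
    proof -
      have "(4::real) *\<^sub>R FQ sg dd p = (2 + 2) *\<^sub>R FQ sg dd p" by simp
      also have "\<dots> = FQ sg dd p + FQ sg dd p + FQ sg dd p + FQ sg dd p"
        by (simp only: scaleR_add_left scaleR_2 add.assoc)
      finally show ?thesis .
    qed
    have h6: "(6::real) *\<^sub>R X = X + X + X + X + X + X"
    proof -
      have "(6::real) *\<^sub>R X = (2 + 2 + 2) *\<^sub>R X" by simp
      also have "\<dots> = X + X + X + X + X + X"
        by (simp only: scaleR_add_left scaleR_2 add.assoc)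
      finally show ?thesis .
    qed
    have "F4 sg dd p = (4::real) *\<^sub>R FQ sg dd p - (6::real) *\<^sub>R X"
      unfolding h4 h6 kdv by (simp add: add.assoc)
    thus ?thesis by (simp add: scaleR_diff_right)
  qed
  have fin: "pdt u x t - (1/4) *\<^sub>R pdx (pdx (pdx u)) x t - (3/2) *\<^sub>R pdx (\<lambda>y s. u y s ** u y s) x t = 0"
  proof -
    have "pdt u x t - (1/4) *\<^sub>R pdx (pdx (pdx u)) x t - (3/2) *\<^sub>R pdx (\<lambda>y s. u y s ** u y s) x t
        = LL (FQ sg dd p - (1/4) *\<^sub>R F4 sg dd p - (3/2) *\<^sub>R X)"
      unfolding e4 e5 e6 p_def[symmetric] X_def[symmetric]
      by (simp add: linear_diff[OF lin] linear_scale[OF lin])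
    also have "\<dots> = 0" unfolding zero by (rule linear_0[OF lin])
    finally show ?thesis .
  qed
  show ?thesis
    using dphi[OF xinv] du[OF xO] ddu[OF xO] dddu dut du2 fin e1 e2 e3 e4 e5 e6 by simp
qed


end
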